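(* Let $\mathcal{B}=(T,\bowtie)$ be a block and let $\mathcal S,\mathcal S'$ be two valid schedules of $\mathcal{B}$ such that for all $tx_a,tx_b\in T$ with $tx_a\bowtie tx_b$: if $(T,\mathcal S)$ contains a directed path from $tx_a$ to $tx_b$, then $(T,\mathcal S')$ contains a directed path from $tx_a$ to $tx_b$. Then all executions of $GBR$ on $\mathcal S$ and on $\mathcal S'$ are equivalent, i.e., for every initial global state, every execution of $GBR$ on $\mathcal S$ and every execution of $GBR$ on $\mathcal S'$ from that state produce the same result for every transaction and the same final global state.
   Context: A block is a finite set $T$ of transactions. Each transaction $tx$ is deterministic (its effect and result depend only on its inputs and the values it reads) and has a read-set $R(tx)$ and write-set $W(tx)$ containing all objects of the global state it may read, respectively write. Distinct $tx_1,tx_2$ conflict ($tx_1\bowtie tx_2$) if $R(tx_1)\cap W(tx_2)$, $W(tx_1)\cap R(tx_2)$ or $W(tx_1)\cap W(tx_2)$ is nonempty. A schedule is a set $\mathcal S\subseteq T\times T$ with $(T,\mathcal S)$ acyclic; it is valid if every conflicting pair is joined by a directed path in $(T,\mathcal S)$ in one direction or the other. The scheduler $GBR$ executes a schedule $\mathcal S$ by running each transaction in its own thread; the thread of $tx$ waits until every $tx'$ with $(tx',tx)\in\mathcal S$ has finished, then reads the latest version of the objects in $R(tx)$, executes $tx$, stores the new values of $W(tx)$, emits its result and signals its out-neighbours; otherwise transactions may run concurrently. *)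

theory Defs
  imports Main
begin

text \<open>Transactions of type 't act on a global state of type 'o \<Rightarrow> 'v (objects to values).
  Each transaction t has read set R t and write set W t.  Its behaviour is given by
  eff t \<sigma>, the values it writes (only the values at objects in W t are stored), and
  res t \<sigma>, its result, where \<sigma> is the state it has read.\<close>

definition conflict :: "('t \<Rightarrow> 'o set) \<Rightarrow> ('t \<Rightarrow> 'o set) \<Rightarrow> 't \<Rightarrow> 't \<Rightarrow> bool" where
  "conflict R W t1 t2 \<longleftrightarrow> t1 \<noteq> t2 \<and>
     (R t1 \<inter> W t2 \<noteq> {} \<or> W t1 \<inter> R t2 \<noteq> {} \<or> W t1 \<inter> W t2 \<noteq> {})"

definition deterministic ::
  "('t \<Rightarrow> 'o set) \<Rightarrow> ('t \<Rightarrow> ('o \<Rightarrow> 'v) \<Rightarrow> ('o \<Rightarrow> 'v)) \<Rightarrow> ('t \<Rightarrow> ('o \<Rightarrow> 'v) \<Rightarrow> 'r) \<Rightarrow> bool" where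
  "deterministic R eff res \<longleftrightarrow>
     (\<forall>t \<sigma> \<sigma>'. (\<forall>x\<in>R t. \<sigma> x = \<sigma>' x) \<longrightarrow> eff t \<sigma> = eff t \<sigma>' \<and> res t \<sigma> = res t \<sigma>')"

definition schedule :: "'t set \<Rightarrow> ('t \<times> 't) set \<Rightarrow> bool" where
  "schedule T S \<longleftrightarrow> S \<subseteq> T \<times> T \<and> acyclic S"

definition valid_schedule :: "('t \<Rightarrow> 'o set) \<Rightarrow> ('t \<Rightarrow> 'o set) \<Rightarrow> 't set \<Rightarrow> ('t \<times> 't) set \<Rightarrow> bool" where
  "valid_schedule R W T S \<longleftrightarrow> schedule T S \<and>
     (\<forall>a\<in>T. \<forall>b\<in>T. conflict R W a b \<longrightarrow> (a, b) \<in> S\<^sup>+ \<or> (b, a) \<in> S\<^sup>+)"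

text \<open>Events of a GBR execution: the thread of t reads (a snapshot of) the current state,
  and later stores its written values (and then signals completion).\<close>
datatype 't event = Rd 't | Wr 't

definition gbr_trace :: "'t set \<Rightarrow> ('t \<times> 't) set \<Rightarrow> 't event list \<Rightarrow> bool" where
  "gbr_trace T S es \<longleftrightarrow> distinct es \<and> set es = Rd ` T \<union> Wr ` T \<and>
     (\<forall>t\<in>T. \<forall>i j. i < length es \<and> j < length es \<and> es ! i = Rd t \<and> es ! j = Wr t \<longrightarrow> i < j) \<and>
     (\<forall>(a, b)\<in>S. \<forall>i j. i < length es \<and> j < length es \<and> es ! i = Wr a \<and> es ! j = Rd b \<longrightarrow> i < j)"

text \<open>Running a trace: state = (global state, state read by each transaction).\<close>
fun gbr_run :: "('t \<Rightarrow> 'o set) \<Rightarrow> ('t \<Rightarrow> ('o \<Rightarrow> 'v) \<Rightarrow> ('o \<Rightarrow> 'v)) \<Rightarrow> 't event list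
    \<Rightarrow> ('o \<Rightarrow> 'v) \<Rightarrow> ('t \<Rightarrow> ('o \<Rightarrow> 'v)) \<Rightarrow> ('o \<Rightarrow> 'v) \<times> ('t \<Rightarrow> ('o \<Rightarrow> 'v))" where
  "gbr_run W eff [] \<sigma> rd = (\<sigma>, rd)"
| "gbr_run W eff (Rd t # es) \<sigma> rd = gbr_run W eff es \<sigma> (rd(t := \<sigma>))"
| "gbr_run W eff (Wr t # es) \<sigma> rd =
     gbr_run W eff es (\<lambda>x. if x \<in> W t then eff t (rd t) x else \<sigma> x) rd"

definition gbr_final :: "('t \<Rightarrow> 'o set) \<Rightarrow> ('t \<Rightarrow> ('o \<Rightarrow> 'v) \<Rightarrow> ('o \<Rightarrow> 'v)) \<Rightarrow> 't event list
    \<Rightarrow> ('o \<Rightarrow> 'v) \<Rightarrow> ('o \<Rightarrow> 'v)" where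
  "gbr_final W eff es \<sigma>0 = fst (gbr_run W eff es \<sigma>0 (\<lambda>_. \<sigma>0))"

definition gbr_result :: "('t \<Rightarrow> 'o set) \<Rightarrow> ('t \<Rightarrow> ('o \<Rightarrow> 'v) \<Rightarrow> ('o \<Rightarrow> 'v)) \<Rightarrow> ('t \<Rightarrow> ('o \<Rightarrow> 'v) \<Rightarrow> 'r)
    \<Rightarrow> 't event list \<Rightarrow> ('o \<Rightarrow> 'v) \<Rightarrow> 't \<Rightarrow> 'r" where
  "gbr_result W eff res es \<sigma>0 t = res t (snd (gbr_run W eff es \<sigma>0 (\<lambda>_. \<sigma>0)) t)"

end

theory Submission
  imports Defs
begin

fun tx :: "'t event \<Rightarrow> 't" where
  "tx (Rd t) = t" | "tx (Wr t) = t"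

fun dep0 :: "('t \<Rightarrow> 'o set) \<Rightarrow> ('t \<Rightarrow> 'o set) \<Rightarrow> 't event \<Rightarrow> 't event \<Rightarrow> bool" where
  "dep0 R W (Rd a) (Wr b) = (a = b \<or> R a \<inter> W b \<noteq> {})"
| "dep0 R W (Wr a) (Wr b) = (W a \<inter> W b \<noteq> {})"
| "dep0 R W _ _ = False"

definition dep where "dep R W e f \<longleftrightarrow> dep0 R W e f \<or> dep0 R W f e"

definition eqv :: "('t \<Rightarrow> 'o set) \<Rightarrow> ('o \<Rightarrow> 'v) \<times> ('t \<Rightarrow> ('o \<Rightarrow> 'v)) \<Rightarrow> ('o \<Rightarrow> 'v) \<times> ('t \<Rightarrow> ('o \<Rightarrow> 'v)) \<Rightarrow> bool" where
  "eqv R p q \<longleftrightarrow> fst p = fst q \<and> (\<forall>t. \<forall>x\<in>R t. snd p t x = snd q t x)"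

lemma eqv_refl: "eqv R p p" by (simp add: eqv_def)
lemma eqv_sym: "eqv R p q \<Longrightarrow> eqv R q p" by (simp add: eqv_def)
lemma eqv_trans: "eqv R p q \<Longrightarrow> eqv R q r \<Longrightarrow> eqv R p r" by (simp add: eqv_def)

fun before :: "'a list \<Rightarrow> 'a \<Rightarrow> 'a \<Rightarrow> bool" where
  "before [] a b = False"
| "before (x # xs) a b = ((x = a \<and> b \<in> set xs) \<or> before xs a b)"

lemma before_set: "before xs a b \<Longrightarrow> a \<in> set xs \<and> b \<in> set xs"
  by (induction xs) auto

lemma before_append: "before (us @ vs) a b \<longleftrightarrow> before us a b \<or> (a \<in> set us \<and> b \<in> set vs) \<or> before vs a b"
  by (induction us) auto

lemma before_asym: "distinct xs \<Longrightarrow> before xs a b \<Longrightarrow> \<not> before xs b a"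
  by (induction xs) (auto dest: before_set)

lemma before_trans: "distinct xs \<Longrightarrow> before xs a b \<Longrightarrow> before xs b c \<Longrightarrow> before xs a c"
  by (induction xs) (auto dest: before_set)

lemma before_nth: "i < j \<Longrightarrow> j < length xs \<Longrightarrow> before xs (xs ! i) (xs ! j)"
proof (induction xs arbitrary: i j)
  case Nil then show ?case by simp
next
  case (Cons x xs)
  show ?case
  proof (cases i)
    case 0
    then obtain j' where "j = Suc j'" using Cons by (cases j) auto
    then show ?thesis using 0 Cons by auto
  next
    case (Suc i')
    then obtain j' where "j = Suc j'" using Cons by (cases j) auto
    then show ?thesis using Suc Cons by auto
  qed
qed

lemma run_cong:
  assumes "deterministic R eff res"
  shows "\<forall>t. \<forall>x\<in>R t. rd t x = rd' t x \<Longrightarrow> eqv R (gbr_run W eff es \<sigma> rd) (gbr_run W eff es \<sigma> rd')"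
proof (induction es arbitrary: \<sigma> rd rd')
  case Nil then show ?case by (simp add: eqv_def)
next
  case (Cons e es)
  show ?case
  proof (cases e)
    case (Rd t)
    then show ?thesis using Cons by simp
  next
    case (Wr t)
    have "eff t (rd t) = eff t (rd' t)" using assms Cons.prems unfolding deterministic_def by blast
    then have "(\<lambda>x. if x \<in> W t then eff t (rd t) x else \<sigma> x) = (\<lambda>x. if x \<in> W t then eff t (rd' t) x else \<sigma> x)" by (simp only:)
    then show ?thesis using Cons.IH[OF Cons.prems] Wr by simp
  qed
qed

lemma run_swap:
  assumes det: "deterministic R eff res" and nd: "\<not> dep R W e f" and ne: "e \<noteq> f"
  shows "eqv R (gbr_run W eff (e # f # zs) \<sigma> rd) (gbr_run W eff (f # e # zs) \<sigma> rd)"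
proof (cases e)
  case (Rd a)
  show ?thesis
  proof (cases f)
    case (Rd b)
    then have "a \<noteq> b" using ne \<open>e = Rd a\<close> by auto
    then have "rd(a := \<sigma>, b := \<sigma>) = rd(b := \<sigma>, a := \<sigma>)" by (simp add: fun_upd_twist)
    then show ?thesis using Rd \<open>e = Rd a\<close> by (simp add: eqv_refl)
  next
    case (Wr b)
    then have ab: "a \<noteq> b" and dj: "R a \<inter> W b = {}" using nd \<open>e = Rd a\<close> by (auto simp: dep_def)
    define \<sigma>1 where "\<sigma>1 = (\<lambda>x. if x \<in> W b then eff b (rd b) x else \<sigma> x)"
    have l: "gbr_run W eff (e # f # zs) \<sigma> rd = gbr_run W eff zs \<sigma>1 (rd(a := \<sigma>))"
      using Wr \<open>e = Rd a\<close> ab unfolding \<sigma>1_def by (simp only: gbr_run.simps fun_upd_other[OF ab[symmetric]])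
    have r: "gbr_run W eff (f # e # zs) \<sigma> rd = gbr_run W eff zs \<sigma>1 (rd(a := \<sigma>1))"
      using Wr \<open>e = Rd a\<close> unfolding \<sigma>1_def by (simp only: gbr_run.simps)
    have "\<forall>t. \<forall>x\<in>R t. (rd(a := \<sigma>)) t x = (rd(a := \<sigma>1)) t x"
      using dj by (auto simp: \<sigma>1_def)
    then show ?thesis unfolding l r by (rule run_cong[OF det])
  qed
next
  case (Wr a)
  show ?thesis
  proof (cases f)
    case (Rd b)
    then have ab: "a \<noteq> b" and dj: "R b \<inter> W a = {}" using nd \<open>e = Wr a\<close> by (auto simp: dep_def)
    define \<sigma>1 where "\<sigma>1 = (\<lambda>x. if x \<in> W a then eff a (rd a) x else \<sigma> x)"
    have l: "gbr_run W eff (f # e # zs) \<sigma> rd = gbr_run W eff zs \<sigma>1 (rd(b := \<sigma>))"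
      using Rd \<open>e = Wr a\<close> ab unfolding \<sigma>1_def by (simp only: gbr_run.simps fun_upd_other[OF ab])
    have r: "gbr_run W eff (e # f # zs) \<sigma> rd = gbr_run W eff zs \<sigma>1 (rd(b := \<sigma>1))"
      using Rd \<open>e = Wr a\<close> unfolding \<sigma>1_def by (simp only: gbr_run.simps)
    have "\<forall>t. \<forall>x\<in>R t. (rd(b := \<sigma>)) t x = (rd(b := \<sigma>1)) t x"
      using dj by (auto simp: \<sigma>1_def)
    then show ?thesis unfolding l r by (rule eqv_sym[OF run_cong[OF det]])
  next
    case (Wr b)
    then have dj: "W a \<inter> W b = {}" using nd \<open>e = Wr a\<close> by (auto simp: dep_def)
    have "(\<lambda>x. if x \<in> W b then eff b (rd b) x else if x \<in> W a then eff a (rd a) x else \<sigma> x)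
        = (\<lambda>x. if x \<in> W a then eff a (rd a) x else if x \<in> W b then eff b (rd b) x else \<sigma> x)"
      using dj by (intro ext) auto
    then show ?thesis using Wr \<open>e = Wr a\<close> by (simp add: eqv_refl)
  qed
qed

lemma run_step: "\<exists>\<sigma>1 rd1. \<forall>l. gbr_run W eff (x # l) \<sigma> rd = gbr_run W eff l \<sigma>1 rd1"
  by (cases x) auto

lemma run_commute:
  assumes det: "deterministic R eff res"
  shows "\<forall>y\<in>set ys. \<not> dep R W e y \<and> y \<noteq> e \<Longrightarrow>
    eqv R (gbr_run W eff (ys @ e # zs) \<sigma> rd) (gbr_run W eff (e # ys @ zs) \<sigma> rd)"
proof (induction ys arbitrary: \<sigma> rd)
  case Nil then show ?case by (simp add: eqv_refl)
next
  case (Cons y ys)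
  obtain \<sigma>1 rd1 where s: "\<forall>l. gbr_run W eff (y # l) \<sigma> rd = gbr_run W eff l \<sigma>1 rd1"
    using run_step by blast
  have A: "eqv R (gbr_run W eff (y # (ys @ e # zs)) \<sigma> rd) (gbr_run W eff (y # e # ys @ zs) \<sigma> rd)"
    using Cons s by simp
  have "\<not> dep R W y e" "y \<noteq> e" using Cons.prems by (auto simp: dep_def)
  then have B: "eqv R (gbr_run W eff (y # e # ys @ zs) \<sigma> rd) (gbr_run W eff (e # y # ys @ zs) \<sigma> rd)"
    by (rule run_swap[OF det])
  show ?case using eqv_trans[OF A B] by simp
qed

lemma run_perm:
  assumes det: "deterministic R eff res"
  shows "distinct xs \<Longrightarrow> distinct ys \<Longrightarrow> set xs = set ys \<Longrightarrow>
    (\<forall>e f. dep R W e f \<longrightarrow> before xs e f \<longrightarrow> before ys e f) \<Longrightarrow>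
    eqv R (gbr_run W eff xs \<sigma> rd) (gbr_run W eff ys \<sigma> rd)"
proof (induction xs arbitrary: ys \<sigma> rd)
  case Nil then show ?case by (simp add: eqv_refl)
next
  case (Cons x xs)
  have "x \<in> set ys" using Cons.prems by auto
  then obtain us vs where ys: "ys = us @ x # vs" by (meson split_list)
  have nd: "\<forall>u\<in>set us. \<not> dep R W x u \<and> u \<noteq> x"
  proof
    fix u assume u: "u \<in> set us"
    have ux: "u \<noteq> x" using Cons.prems(2) ys u by auto
    moreover have "\<not> dep R W x u"
    proof
      assume d: "dep R W x u"
      have "u \<in> set xs" using u ux Cons.prems(3) ys by auto
      then have "before (x # xs) x u" by simp
      then have bxu: "before ys x u" using Cons.prems(4) d by blast
      have "before ys u x" using u ys by (simp add: before_append)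
      then show False using before_asym[OF Cons.prems(2) bxu] by simp
    qed
    ultimately show "\<not> dep R W x u \<and> u \<noteq> x" by simp
  qed
  have c1: "eqv R (gbr_run W eff ys \<sigma> rd) (gbr_run W eff (x # us @ vs) \<sigma> rd)"
    unfolding ys by (rule run_commute[OF det nd])
  obtain \<sigma>1 rd1 where s: "\<forall>l. gbr_run W eff (x # l) \<sigma> rd = gbr_run W eff l \<sigma>1 rd1"
    using run_step by blast
  have d1: "distinct (us @ vs)" using Cons.prems(2) ys by auto
  have xn: "x \<notin> set xs" "x \<notin> set us" "x \<notin> set vs" using Cons.prems(1,2) ys by auto
  have "insert x (set xs) = insert x (set (us @ vs))" using Cons.prems(3) ys by auto
  then have s1: "set xs = set (us @ vs)" using xn by (metis Un_iff insert_ident set_append)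
  have b1: "\<forall>e f. dep R W e f \<longrightarrow> before xs e f \<longrightarrow> before (us @ vs) e f"
  proof (intro allI impI)
    fix e f assume d: "dep R W e f" and b: "before xs e f"
    have "e \<noteq> x" "f \<noteq> x" using before_set[OF b] Cons.prems(1) by auto
    moreover have "before ys e f" using Cons.prems(4) d b by simp
    ultimately show "before (us @ vs) e f" unfolding ys by (auto simp: before_append)
  qed
  have IH: "eqv R (gbr_run W eff xs \<sigma>1 rd1) (gbr_run W eff (us @ vs) \<sigma>1 rd1)"
    using Cons.IH[OF _ d1 s1 b1] Cons.prems(1) by simp
  have "gbr_run W eff (x # xs) \<sigma> rd = gbr_run W eff xs \<sigma>1 rd1" using s by blast
  moreover have "gbr_run W eff (x # us @ vs) \<sigma> rd = gbr_run W eff (us @ vs) \<sigma>1 rd1" using s by blast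
  ultimately show ?case using IH eqv_sym[OF c1] eqv_trans by metis
qed

lemma trace_RW: "gbr_trace T S es \<Longrightarrow> t \<in> T \<Longrightarrow> before es (Rd t) (Wr t)"
proof -
  assume tr: "gbr_trace T S es" and t: "t \<in> T"
  have "Rd t \<in> set es" "Wr t \<in> set es" using tr t unfolding gbr_trace_def by auto
  then obtain i j where "i < length es" "es ! i = Rd t" "j < length es" "es ! j = Wr t"
    by (metis in_set_conv_nth)
  moreover then have "i < j" using tr t unfolding gbr_trace_def by blast
  ultimately show ?thesis using before_nth by metis
qed

lemma trace_S: "gbr_trace T S es \<Longrightarrow> S \<subseteq> T \<times> T \<Longrightarrow> (a, b) \<in> S \<Longrightarrow> before es (Wr a) (Rd b)"
proof -
  assume tr: "gbr_trace T S es" and sub: "S \<subseteq> T \<times> T" and ab: "(a, b) \<in> S"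
  have "Wr a \<in> set es" "Rd b \<in> set es" using tr ab sub unfolding gbr_trace_def by auto
  then obtain i j where "i < length es" "es ! i = Wr a" "j < length es" "es ! j = Rd b"
    by (metis in_set_conv_nth)
  moreover then have "i < j" using tr ab unfolding gbr_trace_def by blast
  ultimately show ?thesis using before_nth by metis
qed

lemma trace_Splus:
  assumes tr: "gbr_trace T S es" and sub: "S \<subseteq> T \<times> T"
  shows "(a, b) \<in> S\<^sup>+ \<Longrightarrow> before es (Wr a) (Rd b)"
proof (induction rule: trancl.induct)
  case (r_into_trancl a b) then show ?case using trace_S[OF tr sub] by blast
next
  case (trancl_into_trancl a b c)
  have ds: "distinct es" using tr unfolding gbr_trace_def by blast
  have "b \<in> T" using trancl_into_trancl(2) sub by auto
  then have "before es (Rd b) (Wr b)" using trace_RW[OF tr] by blast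
  moreover have "before es (Wr b) (Rd c)" using trace_S[OF tr sub trancl_into_trancl(2)] .
  ultimately show ?case using before_trans[OF ds trancl_into_trancl(3)] before_trans[OF ds] by metis
qed

lemma ord2:
  assumes tr: "gbr_trace T S es" and sub: "S \<subseteq> T \<times> T" and ab: "(a, b) \<in> S\<^sup>+"
    and T: "a \<in> T" "b \<in> T" and e: "e \<in> {Rd a, Wr a}" and f: "f \<in> {Rd b, Wr b}"
  shows "before es e f"
proof -
  have ds: "distinct es" using tr unfolding gbr_trace_def by blast
  have 1: "before es (Rd a) (Wr a)" "before es (Rd b) (Wr b)" using trace_RW[OF tr] T by auto
  have 2: "before es (Wr a) (Rd b)" using trace_Splus[OF tr sub ab] .
  have 3: "before es (Rd a) (Rd b)" using before_trans[OF ds 1(1) 2] .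
  have 4: "before es e (Rd b)" using e 2 3 by auto
  have "before es e (Wr b)" using before_trans[OF ds 4 1(2)] .
  then show ?thesis using f 4 by auto
qed

lemma ord1:
  assumes tr: "gbr_trace T S es" and sub: "S \<subseteq> T \<times> T"
    and val: "(a, b) \<in> S\<^sup>+ \<or> (b, a) \<in> S\<^sup>+"
    and T: "a \<in> T" "b \<in> T" and e: "e \<in> {Rd a, Wr a}" and f: "f \<in> {Rd b, Wr b}"
    and b: "before es e f"
  shows "(a, b) \<in> S\<^sup>+"
proof (rule ccontr)
  assume "(a, b) \<notin> S\<^sup>+"
  then have "(b, a) \<in> S\<^sup>+" using val by blast
  then have "before es f e" using ord2[OF tr sub _ T(2) T(1) f e] by blast
  moreover have "distinct es" using tr unfolding gbr_trace_def by blast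
  ultimately show False using before_asym[OF _ b] by blast
qed

lemma dep_conflict: "dep R W e f \<Longrightarrow> tx e \<noteq> tx f \<Longrightarrow> conflict R W (tx e) (tx f)"
  by (cases e; cases f) (auto simp: dep_def conflict_def)

lemma ev_tx: "e \<in> {Rd (tx e), Wr (tx e)}"
  by (cases e) auto

theorem lemma2:
  fixes T :: "'t set" and R W :: "'t \<Rightarrow> 'o set"
    and eff :: "'t \<Rightarrow> ('o \<Rightarrow> 'v) \<Rightarrow> ('o \<Rightarrow> 'v)" and res :: "'t \<Rightarrow> ('o \<Rightarrow> 'v) \<Rightarrow> 'r"
    and S S' :: "('t \<times> 't) set"
  assumes "finite T"
    and "deterministic R eff res"
    and "valid_schedule R W T S"
    and "valid_schedule R W T S'"
    and "\<forall>a\<in>T. \<forall>b\<in>T. conflict R W a b \<longrightarrow> (a, b) \<in> S\<^sup>+ \<longrightarrow> (a, b) \<in> S'\<^sup>+"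
  shows "\<forall>\<sigma>0 es es'. gbr_trace T S es \<longrightarrow> gbr_trace T S' es' \<longrightarrow>
           gbr_final W eff es \<sigma>0 = gbr_final W eff es' \<sigma>0 \<and>
           (\<forall>t\<in>T. gbr_result W eff res es \<sigma>0 t = gbr_result W eff res es' \<sigma>0 t)"
proof (intro allI impI)
  fix \<sigma>0 es es'
  assume tr: "gbr_trace T S es" and tr': "gbr_trace T S' es'"
  have sub: "S \<subseteq> T \<times> T" and sub': "S' \<subseteq> T \<times> T"
    using assms(3,4) unfolding valid_schedule_def schedule_def by auto
  have val: "\<And>a b. a \<in> T \<Longrightarrow> b \<in> T \<Longrightarrow> conflict R W a b \<Longrightarrow> (a, b) \<in> S\<^sup>+ \<or> (b, a) \<in> S\<^sup>+"
    using assms(3) unfolding valid_schedule_def by blast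
  have ds: "distinct es" and ds': "distinct es'" and st: "set es = set es'"
    and se: "set es = Rd ` T \<union> Wr ` T"
    using tr tr' unfolding gbr_trace_def by auto
  have cond: "\<forall>e f. dep R W e f \<longrightarrow> before es e f \<longrightarrow> before es' e f"
  proof (intro allI impI)
    fix e f assume d: "dep R W e f" and b: "before es e f"
    have "e \<in> set es" "f \<in> set es" using before_set[OF b] by auto
    then have Te: "tx e \<in> T" and Tf: "tx f \<in> T" using se by auto
    show "before es' e f"
    proof (cases "tx e = tx f")
      case True
      have "e \<noteq> f" using before_asym[OF ds b] b by blast
      then have "(e = Rd (tx e) \<and> f = Wr (tx e)) \<or> (e = Wr (tx e) \<and> f = Rd (tx e))"
        using ev_tx[of e] ev_tx[of f] True by auto
      moreover have "\<not> (e = Wr (tx e) \<and> f = Rd (tx e))"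
        using before_asym[OF ds trace_RW[OF tr Te]] b by auto
      ultimately have "e = Rd (tx e) \<and> f = Wr (tx e)" by blast
      then show ?thesis using trace_RW[OF tr' Te] by metis
    next
      case False
      have c: "conflict R W (tx e) (tx f)" using dep_conflict[OF d False] .
      have "(tx e, tx f) \<in> S\<^sup>+"
        using ord1[OF tr sub val[OF Te Tf c] Te Tf ev_tx ev_tx b] .
      then have "(tx e, tx f) \<in> S'\<^sup>+" using assms(5) Te Tf c by blast
      then show ?thesis using ord2[OF tr' sub' _ Te Tf ev_tx ev_tx] by blast
    qed
  qed
  have E: "eqv R (gbr_run W eff es \<sigma>0 (\<lambda>_. \<sigma>0)) (gbr_run W eff es' \<sigma>0 (\<lambda>_. \<sigma>0))"
    using run_perm[OF assms(2) ds ds' st cond] .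
  show "gbr_final W eff es \<sigma>0 = gbr_final W eff es' \<sigma>0 \<and>
           (\<forall>t\<in>T. gbr_result W eff res es \<sigma>0 t = gbr_result W eff res es' \<sigma>0 t)"
  proof
    show "gbr_final W eff es \<sigma>0 = gbr_final W eff es' \<sigma>0"
      using E unfolding eqv_def gbr_final_def by blast
    show "\<forall>t\<in>T. gbr_result W eff res es \<sigma>0 t = gbr_result W eff res es' \<sigma>0 t"
      using E assms(2) unfolding eqv_def gbr_result_def deterministic_def by blast
  qed
qed

end
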